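(* Let $N$ be a finite set and let $s:2^N\to\mathbb{R}$ be a set function whose type-4 Fourier support is $\mathrm{supp}(\widehat{s})=\{B\subseteq N:\widehat{s}^{(4)}_B\neq 0\}=\{B_1,\dots,B_k\}=\mathcal{B}$ (with $B_1,\dots,B_k$ distinct). Let $\mathcal{A}=\{N\setminus B_1,\dots,N\setminus B_k\}$. Let $F^{-1}$ denote the $2^{|N|}\times 2^{|N|}$ matrix $[\mathbb{1}_{A\cap B=\emptyset}]_{A,B\subseteq N}$ (row index $A$, column index $B$), and let $T=(F^{-1})_{\mathcal{A}\mathcal{B}}$ be its submatrix with rows in $\mathcal{A}$ and columns in $\mathcal{B}$. Then $T$ is invertible and $$\mathbf{s}=\big((F^{-1})_{2^N\mathcal{B}}\,T^{-1}\big)\,\mathbf{s}_{\mathcal{A}},$$ where $\mathbf{s}=(s_A)_{A\subseteq N}$, $\mathbf{s}_{\mathcal{A}}=(s_A)_{A\in\mathcal{A}}$, and $(F^{-1})_{2^N\mathcal{B}}$ is the submatrix of $F^{-1}$ consisting of the columns indexed by $\mathcal{B}$.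
   Context: The type-4 discrete set Fourier transform of $s$ is $\widehat{s}^{(4)}_B=\sum_{A\subseteq N,\,A\cup B=N}(-1)^{|A\cap B|}s_A$ for $B\subseteq N$; its inverse is $s_A=\sum_{B\subseteq N,\,A\cap B=\emptyset}\widehat{s}^{(4)}_B$, i.e., $F^{-1}=[\mathbb{1}_{A\cap B=\emptyset}]_{A,B}$ is the inverse of the type-4 transform matrix. Here $\mathbb{1}_P$ is $1$ if $P$ holds and $0$ otherwise. *)

theory Defs
  imports "HOL-Analysis.Analysis"
begin

text \<open>Set functions on subsets of a finite ground set N are modelled as
  functions s :: 'a set \<Rightarrow> real (only values on subsets of N matter).
  Matrices indexed by families of subsets are modelled as functions
  'a set \<Rightarrow> 'a set \<Rightarrow> real (row index first), restricted to
  explicit finite index families.\<close>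

definition fourier4 :: "'a set \<Rightarrow> ('a set \<Rightarrow> real) \<Rightarrow> 'a set \<Rightarrow> real" where
  "fourier4 N s B = (\<Sum>A\<in>{A. A \<subseteq> N \<and> A \<union> B = N}. (-1) ^ card (A \<inter> B) * s A)"

definition fourier4_supp :: "'a set \<Rightarrow> ('a set \<Rightarrow> real) \<Rightarrow> 'a set set" where
  "fourier4_supp N s = {B. B \<subseteq> N \<and> fourier4 N s B \<noteq> 0}"

definition Finv :: "'a set \<Rightarrow> 'a set \<Rightarrow> real" where
  "Finv A B = (if A \<inter> B = {} then 1 else 0)"

definition is_inverse_on :: "'i set \<Rightarrow> 'j set \<Rightarrow> ('i \<Rightarrow> 'j \<Rightarrow> real) \<Rightarrow> ('j \<Rightarrow> 'i \<Rightarrow> real) \<Rightarrow> bool" where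
  "is_inverse_on R C T Ti \<longleftrightarrow>
     (\<forall>a\<in>R. \<forall>a'\<in>R. (\<Sum>b\<in>C. T a b * Ti b a') = (if a = a' then 1 else 0)) \<and>
     (\<forall>b\<in>C. \<forall>b'\<in>C. (\<Sum>a\<in>R. Ti b a * T a b') = (if b = b' then 1 else 0))"

end

theory Submission
  imports Defs
begin


declare sum.cong[fundef_cong]

function muL :: "'a set set \<Rightarrow> 'a set \<Rightarrow> 'a set \<Rightarrow> real" where
  "muL P x y = (if x = y then 1 else if \<not> finite y then 0
     else - (\<Sum>c\<in>{c\<in>P. x \<subseteq> c \<and> c \<subset> y}. muL P x c))"
  by auto
termination
  by (relation "Wellfounded.measure (\<lambda>(P,x,y). card y)") (auto intro: psubset_card_mono)

lemma card_helper: "x \<subset> c \<Longrightarrow> c \<subseteq> y \<Longrightarrow> finite y \<Longrightarrow> card y - card c < card y - card x"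
proof -
  assume "x \<subset> c" "c \<subseteq> y" "finite y"
  then have "card x < card c" "card c \<le> card y"
    by (auto intro: psubset_card_mono card_mono finite_subset)
  then show ?thesis by simp
qed

function muR :: "'a set set \<Rightarrow> 'a set \<Rightarrow> 'a set \<Rightarrow> real" where
  "muR P x y = (if x = y then 1 else if \<not> finite y then 0
     else - (\<Sum>c\<in>{c\<in>P. x \<subset> c \<and> c \<subseteq> y}. muR P c y))"
  by auto
termination
  by (relation "Wellfounded.measure (\<lambda>(P,x,y). card y - card x)") (auto simp: card_helper)

declare muL.simps[simp del] muR.simps[simp del]

lemma muL_zero: "\<not> x \<subseteq> y \<Longrightarrow> muL P x y = 0"
proof -
  assume a: "\<not> x \<subseteq> y"
  then have s0: "{c\<in>P. x \<subseteq> c \<and> c \<subset> y} = {}" by auto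
  have e: "muL P x y = (if x = y then 1 else if \<not> finite y then 0
     else - (\<Sum>c\<in>{c\<in>P. x \<subseteq> c \<and> c \<subset> y}. muL P x c))" by (rule muL.simps)
  have "x \<noteq> y" using a by auto
  then show ?thesis unfolding e s0 by simp
qed

lemma muR_zero: "\<not> x \<subseteq> y \<Longrightarrow> muR P x y = 0"
proof -
  assume a: "\<not> x \<subseteq> y"
  then have s0: "{c\<in>P. x \<subset> c \<and> c \<subseteq> y} = {}" by auto
  have e: "muR P x y = (if x = y then 1 else if \<not> finite y then 0
     else - (\<Sum>c\<in>{c\<in>P. x \<subset> c \<and> c \<subseteq> y}. muR P c y))" by (rule muR.simps)
  have "x \<noteq> y" using a by auto
  then show ?thesis unfolding e s0 by simp
qed

lemma muL_inv:
  assumes fin: "\<And>c. c \<in> P \<Longrightarrow> finite c" and "finite P" and x: "x \<in> P" and y: "y \<in> P"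
  shows "(\<Sum>c\<in>P. muL P x c * (if c \<subseteq> y then 1 else 0)) = (if x = y then 1 else 0)"
proof -
  have "(\<Sum>c\<in>P. muL P x c * (if c \<subseteq> y then 1 else 0)) = (\<Sum>c\<in>P. if x \<subseteq> c \<and> c \<subseteq> y then muL P x c else 0)"
    by (rule sum.cong) (auto simp: muL_zero)
  also have "\<dots> = (\<Sum>c\<in>{c\<in>P. x \<subseteq> c \<and> c \<subseteq> y}. muL P x c)"
    using \<open>finite P\<close> by (simp add: sum.inter_filter)
  also have "\<dots> = (if x = y then 1 else 0)"
  proof (cases "x = y")
    case True
    then have "{c\<in>P. x \<subseteq> c \<and> c \<subseteq> y} = {x}" using x by auto
    then show ?thesis using True by (simp add: muL.simps)
  next
    case False
    show ?thesis
    proof (cases "x \<subseteq> y")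
      case True
      have "{c\<in>P. x \<subseteq> c \<and> c \<subseteq> y} = insert y {c\<in>P. x \<subseteq> c \<and> c \<subset> y}" using True y by auto
      moreover have "muL P x y = - (\<Sum>c\<in>{c\<in>P. x \<subseteq> c \<and> c \<subset> y}. muL P x c)"
        using False fin[OF y] by (subst muL.simps) simp
      ultimately show ?thesis using False \<open>finite P\<close> by simp
    next
      case F2: False
      then have e: "{c\<in>P. x \<subseteq> c \<and> c \<subseteq> y} = {}" by auto
      show ?thesis unfolding e using False by simp
    qed
  qed
  finally show ?thesis .
qed

lemma muR_inv:
  assumes fin: "\<And>c. c \<in> P \<Longrightarrow> finite c" and "finite P" and x: "x \<in> P" and y: "y \<in> P"
  shows "(\<Sum>c\<in>P. (if x \<subseteq> c then 1 else 0) * muR P c y) = (if x = y then 1 else 0)"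
proof -
  have "(\<Sum>c\<in>P. (if x \<subseteq> c then 1 else 0) * muR P c y) = (\<Sum>c\<in>P. if x \<subseteq> c \<and> c \<subseteq> y then muR P c y else 0)"
    by (rule sum.cong) (auto simp: muR_zero)
  also have "\<dots> = (\<Sum>c\<in>{c\<in>P. x \<subseteq> c \<and> c \<subseteq> y}. muR P c y)"
    using \<open>finite P\<close> by (simp add: sum.inter_filter)
  also have "\<dots> = (if x = y then 1 else 0)"
  proof (cases "x = y")
    case True
    then have "{c\<in>P. x \<subseteq> c \<and> c \<subseteq> y} = {x}" using x by auto
    then show ?thesis using True by (simp add: muR.simps)
  next
    case False
    show ?thesis
    proof (cases "x \<subseteq> y")
      case True
      have "{c\<in>P. x \<subseteq> c \<and> c \<subseteq> y} = insert x {c\<in>P. x \<subset> c \<and> c \<subseteq> y}" using True x by auto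
      moreover have "muR P x y = - (\<Sum>c\<in>{c\<in>P. x \<subset> c \<and> c \<subseteq> y}. muR P c y)"
        using False fin[OF y] by (subst muR.simps) simp
      ultimately show ?thesis using False \<open>finite P\<close> by simp
    next
      case F2: False
      then have e: "{c\<in>P. x \<subseteq> c \<and> c \<subseteq> y} = {}" by auto
      show ?thesis unfolding e using False by simp
    qed
  qed
  finally show ?thesis .
qed

lemma delta_sum_r: "finite P \<Longrightarrow> y \<in> P \<Longrightarrow> (\<Sum>c\<in>P. (f c::real) * (if c = y then 1 else 0)) = f y"
proof -
  assume "finite P" "y \<in> P"
  have "(\<Sum>c\<in>P. f c * (if c = y then 1 else 0)) = (\<Sum>c\<in>P. if c = y then f c else 0)"
    by (rule sum.cong) auto
  then show ?thesis using \<open>finite P\<close> \<open>y \<in> P\<close> by (simp add: sum.delta')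
qed

lemma delta_sum_l: "finite P \<Longrightarrow> y \<in> P \<Longrightarrow> (\<Sum>c\<in>P. (if y = c then 1 else 0) * (f c::real)) = f y"
proof -
  assume "finite P" "y \<in> P"
  have "(\<Sum>c\<in>P. (if y = c then 1 else 0) * f c) = (\<Sum>c\<in>P. if y = c then f c else 0)"
    by (rule sum.cong) auto
  then show ?thesis using \<open>finite P\<close> \<open>y \<in> P\<close> by (simp add: sum.delta)
qed

lemma left_right_eq:
  fixes L R Z :: "'b \<Rightarrow> 'b \<Rightarrow> real"
  assumes "finite P"
    and L: "\<And>x y. x \<in> P \<Longrightarrow> y \<in> P \<Longrightarrow> (\<Sum>c\<in>P. L x c * Z c y) = (if x = y then 1 else 0)"
    and R: "\<And>x y. x \<in> P \<Longrightarrow> y \<in> P \<Longrightarrow> (\<Sum>c\<in>P. Z x c * R c y) = (if x = y then 1 else 0)"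
    and x: "x \<in> P" and y: "y \<in> P"
  shows "L x y = R x y"
proof -
  have "L x y = (\<Sum>c\<in>P. L x c * (if c = y then 1 else 0))" using assms by (simp only: delta_sum_r)
  also have "\<dots> = (\<Sum>c\<in>P. L x c * (\<Sum>d\<in>P. Z c d * R d y))" using R y by simp
  also have "\<dots> = (\<Sum>d\<in>P. (\<Sum>c\<in>P. L x c * Z c d) * R d y)"
    by (simp add: sum_distrib_left sum_distrib_right mult.assoc) (rule sum.swap)
  also have "\<dots> = (\<Sum>d\<in>P. (if x = d then 1 else 0) * R d y)" using L x by simp
  also have "\<dots> = R x y" using assms by (simp only: delta_sum_l)
  finally show ?thesis .
qed



lemma alt_sum: "finite S \<Longrightarrow> (\<Sum>C\<in>Pow S. (-1::real) ^ card C) = (if S = {} then 1 else 0)"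
proof (cases "S = {}")
  case False
  assume fin: "finite S"
  have "{} \<subset> S" using False by auto
  from card_subsupersets_even_odd[OF fin this]
  have "card {x \<in> Pow S. even (card x)} = card {x \<in> Pow S. odd (card x)}"
    by (simp add: Pow_def)
  then have "(\<Sum>C\<in>Pow S. (-1::real) ^ card C) = 0"
    using fin by (intro sum_alternating_cancels) auto
  then show ?thesis using False by simp
qed simp

lemma coef:
  assumes "finite N" "X \<subseteq> N" "A \<subseteq> N"
  shows "(\<Sum>B\<in>{B\<in>Pow N. A \<union> B = N \<and> X \<inter> B = {}}. (-1::real) ^ card (A \<inter> B)) = (if A = X then 1 else 0)"
proof (cases "X \<subseteq> A")
  case False
  then have e: "{B\<in>Pow N. A \<union> B = N \<and> X \<inter> B = {}} = {}" using assms by auto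
  show ?thesis unfolding e using False by auto
next
  case True
  have e: "{B\<in>Pow N. A \<union> B = N \<and> X \<inter> B = {}} = (\<lambda>C. (N - A) \<union> C) ` Pow (A - X)"
  proof (intro equalityI subsetI)
    fix B assume "B \<in> {B\<in>Pow N. A \<union> B = N \<and> X \<inter> B = {}}"
    then have "B = (N - A) \<union> (B \<inter> A)" "B \<inter> A \<in> Pow (A - X)" by auto
    then show "B \<in> (\<lambda>C. (N - A) \<union> C) ` Pow (A - X)" by blast
  next
    fix B assume "B \<in> (\<lambda>C. (N - A) \<union> C) ` Pow (A - X)"
    then show "B \<in> {B\<in>Pow N. A \<union> B = N \<and> X \<inter> B = {}}" using assms True by auto
  qed
  have inj: "inj_on (\<lambda>C. (N - A) \<union> C) (Pow (A - X))"
    by (rule inj_onI) auto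
  have "(\<Sum>B\<in>{B\<in>Pow N. A \<union> B = N \<and> X \<inter> B = {}}. (-1::real) ^ card (A \<inter> B))
      = (\<Sum>C\<in>Pow (A - X). (-1::real) ^ card (A \<inter> ((N - A) \<union> C)))"
    unfolding e by (simp add: sum.reindex[OF inj])
  also have "\<dots> = (\<Sum>C\<in>Pow (A - X). (-1::real) ^ card C)"
  proof (rule sum.cong[OF refl])
    fix C assume "C \<in> Pow (A - X)"
    then have "A \<inter> ((N - A) \<union> C) = C" by auto
    then show "(-1::real) ^ card (A \<inter> ((N - A) \<union> C)) = (-1) ^ card C" by simp
  qed
  also have "\<dots> = (if A = X then 1 else 0)"
    using True assms by (subst alt_sum) (auto intro: finite_subset)
  finally show ?thesis .
qed

lemma inversion:
  assumes "finite N" "X \<subseteq> N"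
  shows "s X = (\<Sum>B\<in>Pow N. Finv X B * fourier4 N s B)"
proof -
  have "(\<Sum>B\<in>Pow N. Finv X B * fourier4 N s B)
     = (\<Sum>B\<in>Pow N. \<Sum>A\<in>Pow N. (if A \<union> B = N \<and> X \<inter> B = {} then (-1) ^ card (A \<inter> B) else 0) * s A)"
  proof (rule sum.cong[OF refl])
    fix B assume "B \<in> Pow N"
    have "Finv X B * fourier4 N s B = (\<Sum>A\<in>{A\<in>Pow N. A \<union> B = N}. Finv X B * ((-1) ^ card (A \<inter> B) * s A))"
      unfolding fourier4_def Finv_def by (simp add: sum_distrib_left Pow_def)
    also have "\<dots> = (\<Sum>A\<in>Pow N. if A \<union> B = N then Finv X B * ((-1) ^ card (A \<inter> B) * s A) else 0)"
      using assms by (subst sum.inter_filter[symmetric]) (simp_all add: Pow_def)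
    also have "\<dots> = (\<Sum>A\<in>Pow N. (if A \<union> B = N \<and> X \<inter> B = {} then (-1) ^ card (A \<inter> B) else 0) * s A)"
      by (rule sum.cong) (auto simp: Finv_def)
    finally show "Finv X B * fourier4 N s B = \<dots>" .
  qed
  also have "\<dots> = (\<Sum>A\<in>Pow N. (\<Sum>B\<in>Pow N. (if A \<union> B = N \<and> X \<inter> B = {} then (-1) ^ card (A \<inter> B) else 0)) * s A)"
    by (subst sum.swap) (simp add: sum_distrib_right)
  also have "\<dots> = (\<Sum>A\<in>Pow N. (if A = X then 1 else 0) * s A)"
  proof (rule sum.cong[OF refl])
    fix A assume A: "A \<in> Pow N"
    have "(\<Sum>B\<in>Pow N. (if A \<union> B = N \<and> X \<inter> B = {} then (-1::real) ^ card (A \<inter> B) else 0))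
       = (\<Sum>B\<in>{B\<in>Pow N. A \<union> B = N \<and> X \<inter> B = {}}. (-1::real) ^ card (A \<inter> B))"
      using assms by (subst sum.inter_filter[symmetric]) (simp_all add: Pow_def)
    also have "\<dots> = (if A = X then 1 else 0)" using coef[OF assms] A by simp
    finally show "(\<Sum>B\<in>Pow N. (if A \<union> B = N \<and> X \<inter> B = {} then (-1::real) ^ card (A \<inter> B) else 0)) * s A
       = (if A = X then 1 else 0) * s A" by simp
  qed
  also have "\<dots> = (\<Sum>A\<in>Pow N. if A = X then s A else 0)" by (rule sum.cong) auto
  also have "\<dots> = s X" using assms by (simp add: sum.delta)
  finally show ?thesis by simp
qed


lemma supp_props:
  assumes "finite N"
  shows "fourier4_supp N s \<subseteq> Pow N" "finite (fourier4_supp N s)"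
proof -
  show "fourier4_supp N s \<subseteq> Pow N" unfolding fourier4_supp_def by auto
  then show "finite (fourier4_supp N s)" using assms by (meson finite_Pow_iff finite_subset)
qed

lemma inversion_supp:
  assumes "finite N" "X \<subseteq> N"
  shows "s X = (\<Sum>B\<in>fourier4_supp N s. Finv X B * fourier4 N s B)"
proof -
  have "s X = (\<Sum>B\<in>Pow N. Finv X B * fourier4 N s B)" by (rule inversion[OF assms])
  also have "\<dots> = (\<Sum>B\<in>fourier4_supp N s. Finv X B * fourier4 N s B)"
    using assms supp_props[OF assms(1), of s]
    by (intro sum.mono_neutral_right) (auto simp: fourier4_supp_def)
  finally show ?thesis .
qed

theorem theorem4:
  fixes N :: "'a set" and s :: "'a set \<Rightarrow> real"
  assumes "finite N"
  defines "\<B> \<equiv> fourier4_supp N s"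
      and "\<A> \<equiv> (\<lambda>B. N - B) ` fourier4_supp N s"
      and "T \<equiv> (\<lambda>A B. Finv A B)"
  shows "(\<exists>Ti. is_inverse_on \<A> \<B> T Ti) \<and>
         (\<forall>Ti. is_inverse_on \<A> \<B> T Ti \<longrightarrow>
            (\<forall>X. X \<subseteq> N \<longrightarrow>
               s X = (\<Sum>A\<in>\<A>. (\<Sum>B\<in>\<B>. Finv X B * Ti B A) * s A)))"
proof
  have PN: "\<B> \<subseteq> Pow N" and finP: "finite \<B>"
    using supp_props[OF assms(1), of s] unfolding \<B>_def by auto
  have fin: "\<And>c. c \<in> \<B> \<Longrightarrow> finite c" using PN assms(1) by (auto intro: finite_subset)
  have AB: "\<A> = (\<lambda>B. N - B) ` \<B>" unfolding \<A>_def \<B>_def by simp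
  have inj: "inj_on (\<lambda>B. N - B) \<B>" using PN by (intro inj_onI) blast
  have finA: "finite \<A>" using AB finP by simp
  have AN: "\<A> \<subseteq> Pow N" using AB by auto
  have Fc: "\<And>B b. B \<subseteq> N \<Longrightarrow> b \<subseteq> N \<Longrightarrow> Finv (N - B) b = (if b \<subseteq> B then 1 else 0)"
    unfolding Finv_def by auto
  let ?L = "muL \<B>" and ?R = "muR \<B>"
  have LZ: "\<And>x y. x \<in> \<B> \<Longrightarrow> y \<in> \<B> \<Longrightarrow> (\<Sum>c\<in>\<B>. ?L x c * (if c \<subseteq> y then 1 else 0)) = (if x = y then 1 else 0)"
    by (rule muL_inv[OF fin finP])
  have ZR: "\<And>x y. x \<in> \<B> \<Longrightarrow> y \<in> \<B> \<Longrightarrow> (\<Sum>c\<in>\<B>. (if x \<subseteq> c then 1 else 0) * ?R c y) = (if x = y then 1 else 0)"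
    by (rule muR_inv[OF fin finP])
  have LR: "\<And>x y. x \<in> \<B> \<Longrightarrow> y \<in> \<B> \<Longrightarrow> ?L x y = ?R x y"
    by (rule left_right_eq[OF finP, of ?L "\<lambda>a b. if a \<subseteq> b then 1 else 0" ?R]) (auto simp: LZ ZR)
  define Ti where "Ti = (\<lambda>b A. ?L (N - A) b)"
  show "\<exists>Ti. is_inverse_on \<A> \<B> T Ti"
  proof (rule exI[of _ Ti], unfold is_inverse_on_def, intro conjI ballI)
    fix a a' assume a: "a \<in> \<A>" and a': "a' \<in> \<A>"
    then obtain B1 B2 where B: "B1 \<in> \<B>" "B2 \<in> \<B>" "a = N - B1" "a' = N - B2" using AB by auto
    have "(\<Sum>b\<in>\<B>. T a b * Ti b a') = (\<Sum>b\<in>\<B>. ?L B2 b * (if b \<subseteq> B1 then 1 else 0))"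
    proof (rule sum.cong[OF refl])
      fix b assume "b \<in> \<B>"
      then have "b \<subseteq> N" "B1 \<subseteq> N" "N - (N - B2) = B2" using B PN by auto
      then show "T a b * Ti b a' = ?L B2 b * (if b \<subseteq> B1 then 1 else 0)"
        using B unfolding T_def Ti_def by (simp add: Fc)
    qed
    also have "\<dots> = (if B2 = B1 then 1 else 0)" using LZ B by simp
    also have "\<dots> = (if a = a' then 1 else 0)" using B PN by auto
    finally show "(\<Sum>b\<in>\<B>. T a b * Ti b a') = (if a = a' then 1 else 0)" .
  next
    fix b b' assume b: "b \<in> \<B>" and b': "b' \<in> \<B>"
    have "(\<Sum>a\<in>\<A>. Ti b a * T a b') = (\<Sum>B\<in>\<B>. Ti b (N - B) * T (N - B) b')"
      unfolding AB by (rule sum.reindex[OF inj, unfolded comp_def])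
    also have "\<dots> = (\<Sum>B\<in>\<B>. (if b' \<subseteq> B then 1 else 0) * ?R B b)"
    proof (rule sum.cong[OF refl])
      fix B assume B: "B \<in> \<B>"
      then have "N - (N - B) = B" "B \<subseteq> N" "b' \<subseteq> N" using PN b' by auto
      then show "Ti b (N - B) * T (N - B) b' = (if b' \<subseteq> B then 1 else 0) * ?R B b"
        using B b LR unfolding T_def Ti_def by (simp add: Fc)
    qed
    also have "\<dots> = (if b' = b then 1 else 0)" using ZR b b' by simp
    finally show "(\<Sum>a\<in>\<A>. Ti b a * T a b') = (if b = b' then 1 else 0)" by auto
  qed
next
  show "\<forall>Ti. is_inverse_on \<A> \<B> T Ti \<longrightarrow>
            (\<forall>X. X \<subseteq> N \<longrightarrow> s X = (\<Sum>A\<in>\<A>. (\<Sum>B\<in>\<B>. Finv X B * Ti B A) * s A))"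
  proof (intro allI impI)
    fix Ti X assume inv: "is_inverse_on \<A> \<B> T Ti" and X: "X \<subseteq> N"
    have PN: "\<B> \<subseteq> Pow N" and finP: "finite \<B>"
      using supp_props[OF assms(1), of s] unfolding \<B>_def by auto
    have AB: "\<A> = (\<lambda>B. N - B) ` \<B>" unfolding \<A>_def \<B>_def by simp
    have finA: "finite \<A>" using AB finP by simp
    have AN: "\<A> \<subseteq> Pow N" using AB by auto
    let ?h = "fourier4 N s"
    have inv2: "\<And>b b'. b \<in> \<B> \<Longrightarrow> b' \<in> \<B> \<Longrightarrow> (\<Sum>a\<in>\<A>. Ti b a * Finv a b') = (if b = b' then 1 else 0)"
      using inv unfolding is_inverse_on_def T_def by blast
    have sA: "\<And>A. A \<in> \<A> \<Longrightarrow> s A = (\<Sum>B'\<in>\<B>. Finv A B' * ?h B')"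
      using inversion_supp[OF assms(1)] AN unfolding \<B>_def by blast
    have key: "(\<Sum>A\<in>\<A>. Ti B A * s A) = ?h B" if B: "B \<in> \<B>" for B
    proof -
      have "(\<Sum>A\<in>\<A>. Ti B A * s A) = (\<Sum>A\<in>\<A>. \<Sum>B'\<in>\<B>. Ti B A * Finv A B' * ?h B')"
        by (rule sum.cong[OF refl]) (simp add: sA sum_distrib_left mult.assoc)
      also have "\<dots> = (\<Sum>B'\<in>\<B>. (\<Sum>A\<in>\<A>. Ti B A * Finv A B') * ?h B')"
        by (subst sum.swap) (simp add: sum_distrib_right)
      also have "\<dots> = (\<Sum>B'\<in>\<B>. (if B = B' then 1 else 0) * ?h B')"
        by (rule sum.cong[OF refl]) (simp add: inv2 B)
      also have "\<dots> = ?h B" by (rule delta_sum_l[OF finP B])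
      finally show ?thesis .
    qed
    have "(\<Sum>A\<in>\<A>. (\<Sum>B\<in>\<B>. Finv X B * Ti B A) * s A) = (\<Sum>B\<in>\<B>. Finv X B * (\<Sum>A\<in>\<A>. Ti B A * s A))"
      by (simp add: sum_distrib_left sum_distrib_right mult.assoc) (rule sum.swap)
    also have "\<dots> = (\<Sum>B\<in>\<B>. Finv X B * ?h B)" by (simp add: key)
    also have "\<dots> = s X" using inversion_supp[OF assms(1) X] unfolding \<B>_def by simp
    finally show "s X = (\<Sum>A\<in>\<A>. (\<Sum>B\<in>\<B>. Finv X B * Ti B A) * s A)" by simp
  qed
qed

end
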